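(* For every $n\geq1$, the number of $n$-multisets of $[n]$ in which no integer other than $n$ occurs exactly once equals the coefficient of $z^n$ in $\frac{1-3z-\sqrt{1-2z-3z^2}}{6z-2}$, i.e. the $n$-th term of OEIS sequence A005773 ($1,1,2,5,13,35,96,\dots$ indexed from $n=0$).
   Context: An $n$-multiset of $[n]=\{1,\dots,n\}$ is a collection of $n$ elements of $[n]$ in which elements may be repeated; the multiplicity of an integer is the number of times it occurs. The condition is that every $j\in\{1,\dots,n-1\}$ has multiplicity different from $1$ (the multiplicity of $n$ is unrestricted). *)

theory Defs
  imports "HOL-Library.Multiset" "HOL-Computational_Algebra.Formal_Power_Series"
begin

text \<open>The formal power series sqrt(1 - 2z - 3z^2) (principal branch, constant term 1),
  realised as the library's formal radical of order 2 with the real square root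
  on the constant coefficient.\<close>
definition sqrt_A005773 :: "real fps" where
  "sqrt_A005773 = fps_radical (\<lambda>k x. root k x) 2 (1 - 2 * fps_X - 3 * fps_X ^ 2)"

definition gf_A005773 :: "real fps" where
  "gf_A005773 = (1 - 3 * fps_X - sqrt_A005773) / (6 * fps_X - 2)"

definition good_multisets :: "nat \<Rightarrow> nat multiset set" where
  "good_multisets n = {M. set_mset M \<subseteq> {1..n} \<and> size M = n \<and>
                          (\<forall>j\<in>{1..n-1}. count M j \<noteq> 1)}"

end

theory Submission
  imports Defs
begin


lemma S_sq: "sqrt_A005773 ^ 2 = 1 - 2 * fps_X - 3 * fps_X ^ 2"
proof -
  let ?a = "1 - 2 * fps_X - 3 * fps_X ^ 2 :: real fps"
  have a0: "fps_nth ?a 0 = 1" by simp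
  have "(root (Suc 1) (fps_nth ?a 0)) ^ Suc 1 = fps_nth ?a 0" using a0 by simp
  then have "(fps_radical (\<lambda>k x. root k x) (Suc 1) ?a) ^ (Suc 1) = ?a"
    using power_radical[of ?a "\<lambda>k x. root k x" 1] a0 by simp
  then show ?thesis unfolding sqrt_A005773_def by (simp add: numeral_2_eq_2)
qed

lemma G_mult: "gf_A005773 * (6 * fps_X - 2) = 1 - 3 * fps_X - sqrt_A005773"
proof -
  have ne: "(6 * fps_X - 2 :: real fps) \<noteq> 0"
  proof
    assume "(6 * fps_X - 2 :: real fps) = 0"
    then have "fps_nth (6 * fps_X - 2 :: real fps) 0 = 0" by simp
    then show False by simp
  qed
  have sd: "subdegree (6 * fps_X - 2 :: real fps) = 0"
    by (rule subdegree_eq_0) simp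
  show ?thesis unfolding gf_A005773_def
    by (rule fps_times_divide_eq[OF ne]) (simp add: sd)
qed

definition RR :: "real fps" where "RR = 1 + 2 * gf_A005773"

lemma RR_eq: "(1 - 3 * fps_X) * RR ^ 2 = 1 + fps_X"
proof -
  have S: "sqrt_A005773 = (1 - 3 * fps_X) * RR"
    using G_mult unfolding RR_def by (simp add: algebra_simps)
  have "(1 - 3 * fps_X) * ((1 - 3 * fps_X) * RR ^ 2) = (1 - 3 * fps_X) * (1 + fps_X)"
    using S_sq unfolding S by (simp add: algebra_simps power2_eq_square)
  moreover have "(1 - 3 * fps_X :: real fps) \<noteq> 0"
  proof
    assume "(1 - 3 * fps_X :: real fps) = 0"
    then have "fps_nth (1 - 3 * fps_X :: real fps) 0 = 0" by simp
    then show False by simp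
  qed
  ultimately show ?thesis by simp
qed

lemma RR_deriv: "(1 - 2 * fps_X - 3 * fps_X ^ 2) * fps_deriv RR = 2 * RR"
proof -
  let ?X = "fps_X :: real fps"
  have E1: "(1 - 3 * ?X) * RR ^ 2 = 1 + ?X" by (rule RR_eq)
  have D: "fps_deriv ((1 - 3 * ?X) * RR ^ 2) = - 3 * RR ^ 2 + (1 - 3 * ?X) * (2 * RR * fps_deriv RR)"
    by (simp add: power2_eq_square algebra_simps)
  have "fps_deriv ((1 - 3 * ?X) * RR ^ 2) = fps_deriv (1 + ?X)" using E1 by simp
  then have E2: "- 3 * RR ^ 2 + (1 - 3 * ?X) * (2 * RR * fps_deriv RR) = 1"
    using D by simp
  have "2 * ((1 - 3 * ?X)^2 * RR^2 * fps_deriv RR) = 4 * RR"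
  proof -
    have "2 * ((1 - 3 * ?X)^2 * RR^2 * fps_deriv RR) = RR * (1 - 3 * ?X) * ((1 - 3 * ?X) * (2 * RR * fps_deriv RR))"
      by (simp add: power2_eq_square algebra_simps)
    also have "\<dots> = RR * (1 - 3 * ?X) * (1 + 3 * RR^2)"
    proof -
      have "(1 - 3 * ?X) * (2 * RR * fps_deriv RR) = 1 - (- 3 * RR ^ 2)"
        unfolding eq_diff_eq using E2 by (simp only: add.commute)
      then show ?thesis by simp
    qed
    also have "\<dots> = RR * (1 - 3 * ?X) + 3 * RR * ((1 - 3 * ?X) * RR^2)" by (simp add: algebra_simps)
    also have "\<dots> = 4 * RR" unfolding E1 by (simp add: algebra_simps)
    finally show ?thesis .
  qed
  then have "(1 - 3 * ?X)^2 * RR^2 * fps_deriv RR = 2 * RR"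
    by (metis (no_types, lifting) mult_2 mult_cancel_left numeral_Bit0 one_add_one zero_neq_numeral
        distrib_left mult.assoc)
  then have "(1 - 3 * ?X) * ((1 - 3 * ?X) * RR^2) * fps_deriv RR = 2 * RR"
    by (simp add: power2_eq_square algebra_simps)
  then show ?thesis unfolding E1 by (simp add: algebra_simps power2_eq_square)
qed

lemma num_mult_nth [simp]: "fps_nth (numeral k * (f :: real fps)) n = numeral k * fps_nth f n"
  by (simp add: numeral_fps_const)

lemma coeff3: "fps_nth ((1 - 2 * fps_X - 3 * fps_X ^ 2) * (D :: real fps)) n =
   fps_nth D n - 2 * (if n = 0 then 0 else fps_nth D (n - 1)) - 3 * (if n < 2 then 0 else fps_nth D (n - 2))"
proof -
  have "(1 - 2 * fps_X - 3 * fps_X ^ 2) * D = D - 2 * (fps_X * D) - 3 * (fps_X ^ 2 * D)"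
    by (simp add: algebra_simps)
  then show ?thesis by (simp add: fps_X_power_mult_nth)
qed

lemma g0: "fps_nth gf_A005773 0 = 0"
proof -
  have "fps_nth (gf_A005773 * (6 * fps_X - 2)) 0 = fps_nth (1 - 3 * fps_X - sqrt_A005773) 0"
    using G_mult by simp
  moreover have "gf_A005773 * (6 * fps_X - 2) = 6 * (fps_X * gf_A005773) - 2 * gf_A005773"
    by (simp add: algebra_simps)
  ultimately show ?thesis unfolding sqrt_A005773_def by simp
qed

lemma RR_rec: "fps_nth RR (Suc n) * of_nat (n + 1) = 2 * fps_nth RR n + 2 * (if n = 0 then 0 else of_nat n * fps_nth RR n)
   + 3 * (if n < 2 then 0 else of_nat (n - 1) * fps_nth RR (n - 1))"
proof -
  have "fps_nth ((1 - 2 * fps_X - 3 * fps_X ^ 2) * fps_deriv RR) n = fps_nth (2 * RR) n"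
    using RR_deriv by simp
  then show ?thesis unfolding coeff3
    apply (cases n; simp)
    subgoal for m by (cases m; simp add: algebra_simps)
    done
qed

lemma g_nth: "n \<ge> 1 \<Longrightarrow> fps_nth RR n = 2 * fps_nth gf_A005773 n"
  unfolding RR_def by simp

lemma g1: "fps_nth gf_A005773 1 = 1"
  using RR_rec[of 0] g_nth[of 1] g0 unfolding RR_def by simp

lemma g2: "fps_nth gf_A005773 2 = 2"
  using RR_rec[of 1] g_nth[of 1] g_nth[of 2] g1 by (simp add: numeral_2_eq_2)

lemma g_rec: "n \<ge> 1 \<Longrightarrow> real (n + 1) * fps_nth gf_A005773 (n + 1) =
   2 * real (n + 1) * fps_nth gf_A005773 n + 3 * real (n - 1) * fps_nth gf_A005773 (n - 1)"
proof -
  assume n: "n \<ge> 1"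
  show ?thesis
  proof (cases "n = 1")
    case True then show ?thesis using g1 g2 by (simp add: numeral_2_eq_2)
  next
    case False
    then have "n \<ge> 2" using n by simp
    then show ?thesis using RR_rec[of n] g_nth[of n] g_nth[of "n+1"] g_nth[of "n-1"]
      by (simp add: algebra_simps of_nat_diff)
  qed
qed



definition ff :: "real \<Rightarrow> nat \<Rightarrow> real" where "ff x k = (\<Prod>i<k. x - real i)"

lemma ffA: "ff y (Suc k) = ff y k * (y - real k)"
  unfolding ff_def by simp

lemma ffB: "ff y (Suc k) = y * ff (y - 1) k"
  unfolding ff_def prod.lessThan_Suc_shift by (simp add: algebra_simps)

lemma bin_ff: "real (n choose k) = ff (real n) k / fact k"
  unfolding binomial_gbinomial gbinomial_prod_rev ff_def atLeast0LessThan by simp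

lemma core:
  fixes m j :: nat
  assumes "j \<le> m"
  shows "real (m+3) * real ((m+2) choose (j+1)) * real ((m+2-j) choose (j+1))
       - 2 * real (m+3) * real ((m+1) choose (j+1)) * real ((m+1-j) choose (j+1))
       - 3 * real (m+1) * real (m choose (j+1)) * real ((m-j) choose (j+1))
     = (4 * real m + 6 - 4 * real j) * real ((m+1) choose j) * real ((m+1-j) choose j)
       - (4 * real m + 2 - 4 * real j) * real ((m+1) choose (j+1)) * real ((m-j) choose (j+1))"
proof -
  define x where "x = real m - real j"
  define P where "P = ff (real m + 1) j"
  define Q where "Q = ff (x + 1) j"
  define f where "f = (fact j :: real)"
  have fpos: "f > 0" unfolding f_def by simp
  have x0: "x \<ge> 0" using assms unfolding x_def by simp
  have fS: "(fact (j+1) :: real) = (real j + 1) * f" unfolding f_def by simp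
  have b1: "real ((m+2) choose (j+1)) = (real m + 2) * P / ((real j + 1) * f)"
    unfolding bin_ff fS P_def using ffB[of "real m + 2" j] by (simp add: add_ac)
  have b2: "real ((m+2-j) choose (j+1)) = (x + 2) * Q / ((real j + 1) * f)"
    unfolding bin_ff fS Q_def using ffB[of "x + 2" j] assms
    by (simp add: x_def of_nat_diff add_ac algebra_simps)
  have b3: "real ((m+1) choose (j+1)) = P * (real m + 1 - real j) / ((real j + 1) * f)"
    unfolding bin_ff fS P_def using ffA[of "real m + 1" j] by (simp add: add_ac)
  have b4: "real ((m+1-j) choose (j+1)) = Q * (x + 1 - real j) / ((real j + 1) * f)"
    unfolding bin_ff fS Q_def using ffA[of "x + 1" j] assms
    by (simp add: x_def of_nat_diff add_ac algebra_simps)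
  have "(real m + 1) * ff (real m) (j+1) = ff (real m + 1) (Suc (Suc j))"
    using ffB[of "real m + 1" "Suc j"] by simp
  also have "\<dots> = P * (real m + 1 - real j) * (real m - real j)"
    unfolding P_def ffA by (simp add: algebra_simps)
  finally have e5: "(real m + 1) * ff (real m) (j+1) = P * (real m + 1 - real j) * (real m - real j)" .
  have b5: "real (m choose (j+1)) = P * (real m + 1 - real j) * (real m - real j) / ((real m + 1) * (real j + 1) * f)"
  proof -
    have nz: "real m + 1 \<noteq> 0" by simp
    have "real (m choose (j+1)) = ((real m + 1) * ff (real m) (j+1)) / ((real m + 1) * ((real j + 1) * f))"
      unfolding bin_ff fS by (rule mult_divide_mult_cancel_left[OF nz, symmetric])
    then show ?thesis unfolding e5 by (simp add: mult.assoc)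
  qed
  have "(x + 1) * ff x (j+1) = ff (x + 1) (Suc (Suc j))"
    using ffB[of "x + 1" "Suc j"] by simp
  also have "\<dots> = Q * (x + 1 - real j) * (x - real j)"
    unfolding Q_def ffA by (simp add: algebra_simps)
  finally have e6: "(x + 1) * ff x (j+1) = Q * (x + 1 - real j) * (x - real j)" .
  have b6: "real ((m-j) choose (j+1)) = Q * (x + 1 - real j) * (x - real j) / ((x + 1) * (real j + 1) * f)"
  proof -
    have nz: "x + 1 \<noteq> 0" using x0 by simp
    have xe: "real (m - j) = x" unfolding x_def using assms by (simp add: of_nat_diff)
    have "real ((m-j) choose (j+1)) = ((x + 1) * ff x (j+1)) / ((x + 1) * ((real j + 1) * f))"
      unfolding bin_ff fS xe by (rule mult_divide_mult_cancel_left[OF nz, symmetric])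
    then show ?thesis unfolding e6 by (simp add: mult.assoc)
  qed
  have b7: "real ((m+1) choose j) = P / f" unfolding bin_ff P_def f_def by (simp add: add_ac)
  have b8: "real ((m+1-j) choose j) = Q / f" unfolding bin_ff Q_def f_def using assms
    by (simp add: x_def of_nat_diff add_ac algebra_simps)
  define D where "D = (real j + 1) * f"
  have Dpos: "D > 0" unfolding D_def using fpos by simp
  define p where "p = P / D"
  define q where "q = Q / D"
  have xm: "real m + 1 - real j = x + 1" "real m - real j = x" unfolding x_def by simp_all
  have c1: "real ((m+2) choose (j+1)) = (real m + 2) * p" unfolding b1 p_def D_def by simp
  have c2: "real ((m+2-j) choose (j+1)) = (x + 2) * q" unfolding b2 q_def D_def by simp
  have c3: "real ((m+1) choose (j+1)) = (x + 1) * p" unfolding b3 p_def D_def xm by simp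
  have c4: "real ((m+1-j) choose (j+1)) = (x + 1 - real j) * q" unfolding b4 q_def D_def by simp
  have nzs: "f + f * real j \<noteq> 0" "f + real j * f \<noteq> 0" "f * real j + f \<noteq> 0" using fpos
    by (smt (verit) mult_nonneg_nonneg of_nat_0_le_iff)+
  have c7: "real ((m+1) choose j) = (real j + 1) * p" unfolding b7 p_def D_def using fpos nzs
    by (simp add: field_simps)
  have c8: "real ((m+1-j) choose j) = (real j + 1) * q" unfolding b8 q_def D_def using fpos nzs
    by (simp add: field_simps)
  have c5: "(real m + 1) * real (m choose (j+1)) = p * (x + 1) * x"
  proof -
    have "(real m+1)*(P*(x+1)*x) / ((real m + 1)*((real j+1)*f)) = P*(x+1)*x/((real j + 1)*f)"
      by (rule mult_divide_mult_cancel_left) simp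
    then show ?thesis unfolding b5 p_def D_def xm by (simp add: mult.assoc)
  qed
  have c6: "(x + 1) * real ((m-j) choose (j+1)) = q * (x + 1 - real j) * (x - real j)"
  proof -
    have "(x+1)*(Q*(x+1-real j)*(x-real j)) / ((x+1)*((real j+1)*f)) = Q*(x+1-real j)*(x-real j)/((real j + 1)*f)"
      by (rule mult_divide_mult_cancel_left) (use x0 in simp)
    then show ?thesis unfolding b6 q_def D_def by (simp add: mult.assoc)
  qed
  have t3: "3 * real (m+1) * real (m choose (j+1)) * real ((m-j) choose (j+1))
      = 3 * x * p * (q * (x + 1 - real j) * (x - real j))"
  proof -
    have "3 * real (m+1) * real (m choose (j+1)) * real ((m-j) choose (j+1))
      = 3 * ((real m + 1) * real (m choose (j+1))) * real ((m-j) choose (j+1))" by simp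
    also have "\<dots> = 3 * x * p * ((x + 1) * real ((m-j) choose (j+1)))" unfolding c5 by simp
    finally show ?thesis unfolding c6 .
  qed
  have t5: "(4 * real m + 2 - 4 * real j) * real ((m+1) choose (j+1)) * real ((m-j) choose (j+1))
      = (4 * real m + 2 - 4 * real j) * p * (q * (x + 1 - real j) * (x - real j))"
  proof -
    have "(4 * real m + 2 - 4 * real j) * real ((m+1) choose (j+1)) * real ((m-j) choose (j+1))
        = (4 * real m + 2 - 4 * real j) * p * ((x + 1) * real ((m-j) choose (j+1)))"
      unfolding c3 by simp
    then show ?thesis unfolding c6 .
  qed
  have mx: "real m = x + real j" unfolding x_def by simp
  show ?thesis
    unfolding t3 t5 unfolding c1 c2 c3 c4 c7 c8
    by (simp add: mx algebra_simps)
qed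

definition FF :: "nat \<Rightarrow> nat \<Rightarrow> real" where
  "FF m k = real (m choose k) * real ((m + 1 - k) choose k)"
definition HH :: "nat \<Rightarrow> nat \<Rightarrow> real" where
  "HH m k = (4 * real m + 6 - 4 * real k) * real ((m+1) choose k) * real ((m+1-k) choose k)"
definition TT :: "nat \<Rightarrow> nat \<Rightarrow> real" where
  "TT m k = real (m+3) * FF (m+2) k - 2 * real (m+3) * FF (m+1) k - 3 * real (m+1) * FF m k"

lemma TT_Suc: "TT m (Suc j) = HH m j - HH m (Suc j)"
proof (cases "j \<le> m")
  case True
  have e: "m + 2 + 1 - Suc j = m + 2 - j" "m + 1 + 1 - Suc j = m + 1 - j" "m + 1 - Suc j = m - j" by auto
  show ?thesis using core[OF True] unfolding TT_def FF_def HH_def e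
    by (simp add: algebra_simps)
next
  case False
  then have j: "j \<ge> m + 1" by simp
  have z1: "FF (m+2) (Suc j) = 0"
  proof (cases "j = m + 1")
    case True then show ?thesis unfolding FF_def by simp
  next
    case False then show ?thesis using j unfolding FF_def by simp
  qed
  have z2: "FF (m+1) (Suc j) = 0" "FF m (Suc j) = 0" using j unfolding FF_def by simp_all
  have z3: "HH m j = 0"
  proof (cases "j = m + 1")
    case True then show ?thesis unfolding HH_def by simp
  next
    case False then show ?thesis using j unfolding HH_def by simp
  qed
  have z4: "HH m (Suc j) = 0" using j unfolding HH_def by simp
  show ?thesis unfolding TT_def z1 z2 z3 z4 by simp
qed

lemma TT_0: "TT m 0 = - HH m 0"
  unfolding TT_def FF_def HH_def by (simp add: algebra_simps)

lemma TT_sum: "(\<Sum>k\<le>K. TT m k) = - HH m K"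
  by (induction K) (simp_all add: TT_0 TT_Suc)

definition aa :: "nat \<Rightarrow> real" where "aa m = (\<Sum>k\<le>m. FF m k)"

lemma aa_ext: "N \<ge> m \<Longrightarrow> aa m = (\<Sum>k\<le>N. FF m k)"
  unfolding aa_def
  by (rule sum.mono_neutral_left) (auto simp: FF_def)

lemma aa_rec: "real (m+3) * aa (m+2) = 2 * real (m+3) * aa (m+1) + 3 * real (m+1) * aa m"
proof -
  have "(\<Sum>k\<le>m+2. TT m k) = 0" unfolding TT_sum HH_def by simp
  moreover have "(\<Sum>k\<le>m+2. TT m k) = real (m+3) * (\<Sum>k\<le>m+2. FF (m+2) k)
      - 2 * real (m+3) * (\<Sum>k\<le>m+2. FF (m+1) k) - 3 * real (m+1) * (\<Sum>k\<le>m+2. FF m k)"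
    unfolding TT_def sum_subtractf sum_distrib_left by (simp only: mult.assoc)
  moreover have "aa (m+2) = (\<Sum>k\<le>m+2. FF (m+2) k)" "aa (m+1) = (\<Sum>k\<le>m+2. FF (m+1) k)"
     "aa m = (\<Sum>k\<le>m+2. FF m k)" by (rule aa_ext; simp)+
  ultimately show ?thesis by simp
qed



definition Lset :: "nat \<Rightarrow> nat \<Rightarrow> nat multiset set" where
  "Lset m s = {M. set_mset M \<subseteq> {1..m} \<and> size M \<le> s \<and> (\<forall>j\<in>{1..m}. count M j \<noteq> 1)}"

definition LL :: "nat \<Rightarrow> nat \<Rightarrow> nat" where
  "LL m s = (\<Sum>k\<le>m. (m choose k) * ((s - k) choose k))"

lemma hockey: "(\<Sum>t<N. (t - k) choose k) = (N - k) choose (k + 1)"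
proof (induction N)
  case 0 then show ?case by simp
next
  case (Suc N)
  show ?case
  proof (cases "N \<ge> k")
    case True
    then have "Suc N - k = Suc (N - k)" by simp
    then show ?thesis using Suc by simp
  next
    case False
    then have "N - k = 0" "Suc N - k \<le> 1" "k \<ge> 1" by auto
    then show ?thesis using Suc
      by (cases "Suc N - k") (auto simp: binomial_eq_0)
  qed
qed

lemma LL_0: "LL 0 s = 1" unfolding LL_def by simp

lemma LL_Suc: "LL (Suc m) s = LL m s + (\<Sum>t<s-1. LL m t)"
proof -
  have A: "LL (Suc m) s = 1 + (\<Sum>k\<le>m. ((m choose k) + (m choose Suc k)) * ((s - Suc k) choose Suc k))"
    unfolding LL_def by (simp add: sum.atMost_Suc_shift del: sum.atMost_Suc)
  have "LL m s = (\<Sum>k\<le>Suc m. (m choose k) * ((s - k) choose k))"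
    unfolding LL_def by simp
  also have "\<dots> = 1 + (\<Sum>k\<le>m. (m choose Suc k) * ((s - Suc k) choose Suc k))"
    by (simp add: sum.atMost_Suc_shift del: sum.atMost_Suc)
  finally have B: "LL m s = 1 + (\<Sum>k\<le>m. (m choose Suc k) * ((s - Suc k) choose Suc k))" .
  have "(\<Sum>t<s-1. LL m t) = (\<Sum>k\<le>m. (m choose k) * (\<Sum>t<s-1. (t - k) choose k))"
    unfolding LL_def sum_distrib_left by (rule sum.swap)
  also have "\<dots> = (\<Sum>k\<le>m. (m choose k) * ((s - Suc k) choose Suc k))"
    unfolding hockey by simp
  finally have C: "(\<Sum>t<s-1. LL m t) = (\<Sum>k\<le>m. (m choose k) * ((s - Suc k) choose Suc k))" .
  show ?thesis unfolding A B C by (simp add: sum.distrib distrib_right)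
qed

lemma Lset_0: "Lset 0 s = {{#}}"
  unfolding Lset_def by auto

lemma split_ms:
  "M = filter_mset (\<lambda>x. x \<noteq> a) M + replicate_mset (count M a) a"
  by (rule multiset_eqI) auto

lemma Lset_Suc: "Lset (Suc m) s = Lset m s \<union>
   (\<Union>t\<in>{..<s-1}. (\<lambda>M. M + replicate_mset (s - t) (Suc m)) ` Lset m t)"
proof (rule set_eqI, rule iffI)
  fix M assume M: "M \<in> Lset (Suc m) s"
  let ?c = "count M (Suc m)"
  let ?M' = "filter_mset (\<lambda>x. x \<noteq> Suc m) M"
  have setM: "set_mset M \<subseteq> {1..Suc m}" and sz: "size M \<le> s" and cnt: "\<forall>j\<in>{1..Suc m}. count M j \<noteq> 1"
    using M unfolding Lset_def by auto
  have eq: "M = ?M' + replicate_mset ?c (Suc m)" by (rule split_ms)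
  show "M \<in> Lset m s \<union> (\<Union>t\<in>{..<s-1}. (\<lambda>M. M + replicate_mset (s - t) (Suc m)) ` Lset m t)"
  proof (cases "?c = 0")
    case True
    have "set_mset M \<subseteq> {1..m}"
    proof
      fix x assume x: "x \<in># M"
      then have "x \<noteq> Suc m" using True by (metis count_eq_zero_iff)
      moreover have "x \<in> {1..Suc m}" using x setM by blast
      ultimately show "x \<in> {1..m}" by simp
    qed
    then have "M \<in> Lset m s" using sz cnt unfolding Lset_def by auto
    then show ?thesis by simp
  next
    case False
    have "Suc m \<in> {1..Suc m}" by simp
    then have "?c \<noteq> 1" using cnt by blast
    then have c2: "?c \<ge> 2" using False by linarith
    have szs: "size M = size ?M' + ?c" using eq by (metis size_replicate_mset size_union)
    have cs: "?c \<le> s" using szs sz by simp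
    define t where "t = s - ?c"
    have t: "t < s - 1" using c2 cs unfolding t_def by simp
    have "?M' \<in> Lset m t"
      unfolding Lset_def t_def
    proof (intro CollectI conjI ballI)
      show "set_mset ?M' \<subseteq> {1..m}" using setM by (auto simp: subset_iff le_Suc_eq)
      show "size ?M' \<le> s - ?c" using szs sz by simp
      fix j assume "j \<in> {1..m}"
      then show "count ?M' j \<noteq> 1" using cnt by auto
    qed
    moreover have "s - t = ?c" unfolding t_def using cs by simp
    ultimately have "M \<in> (\<lambda>M. M + replicate_mset (s - t) (Suc m)) ` Lset m t"
      using eq by (metis image_eqI)
    then show ?thesis using t by blast
  qed
next
  fix M assume H: "M \<in> Lset m s \<union> (\<Union>t\<in>{..<s-1}. (\<lambda>M. M + replicate_mset (s - t) (Suc m)) ` Lset m t)"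
  have c0: "count M (Suc m) = 0" if "set_mset M \<subseteq> {1..m}" for M
  proof -
    have "Suc m \<notin> {1..m}" by simp
    then have "Suc m \<notin># M" using that by blast
    then show ?thesis by (simp add: count_eq_zero_iff)
  qed
  show "M \<in> Lset (Suc m) s"
  proof (cases "M \<in> Lset m s")
    case True
    have setM: "set_mset M \<subseteq> {1..m}" and sz: "size M \<le> s" and cnt: "\<forall>j\<in>{1..m}. count M j \<noteq> 1"
      using True unfolding Lset_def by auto
    have "{1..m} \<subseteq> {1..Suc m}" by simp
    then have s1: "set_mset M \<subseteq> {1..Suc m}" using setM by (rule subset_trans[rotated])
    have s2: "\<forall>j\<in>{1..Suc m}. count M j \<noteq> 1"
    proof
      fix j assume j: "j \<in> {1..Suc m}"
      show "count M j \<noteq> 1"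
      proof (cases "j = Suc m")
        case True then show ?thesis using c0[OF setM] by simp
      next
        case False then have "j \<in> {1..m}" using j by simp
        then show ?thesis using cnt by blast
      qed
    qed
    show ?thesis unfolding Lset_def using s1 sz s2 by blast
  next
    case False
    then have "M \<in> (\<Union>t\<in>{..<s-1}. (\<lambda>M. M + replicate_mset (s - t) (Suc m)) ` Lset m t)"
      using H by (simp only: Un_iff) simp
    then obtain t M' where t: "t \<in> {..<s - 1}" and M': "M' \<in> Lset m t" and M: "M = M' + replicate_mset (s - t) (Suc m)"
      by (rule UN_E) (erule imageE, blast)
    have setM': "set_mset M' \<subseteq> {1..m}" and sz: "size M' \<le> t" and cnt: "\<forall>j\<in>{1..m}. count M' j \<noteq> 1"
      using M' unfolding Lset_def by auto
    have tt: "t < s - 1" using t by simp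
    have s1: "set_mset M \<subseteq> {1..Suc m}"
    proof
      fix x assume "x \<in># M"
      then have "x \<in># M' \<or> x = Suc m" unfolding M by (simp split: if_splits)
      then show "x \<in> {1..Suc m}" using setM' by auto
    qed
    have s2: "size M \<le> s" unfolding M using sz tt by simp
    have s3: "\<forall>j\<in>{1..Suc m}. count M j \<noteq> 1"
    proof
      fix j assume j: "j \<in> {1..Suc m}"
      show "count M j \<noteq> 1"
      proof (cases "j = Suc m")
        case True then show ?thesis unfolding M using c0[OF setM'] tt by simp
      next
        case False then have "j \<in> {1..m}" using j by simp
        then show ?thesis unfolding M using cnt False by simp
      qed
    qed
    show ?thesis unfolding Lset_def using s1 s2 s3 by blast
  qed
qed

lemma c0_lemma: "set_mset M \<subseteq> {1..m} \<Longrightarrow> count M (Suc m) = 0"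
proof -
  assume a: "set_mset M \<subseteq> {1..m}"
  have "Suc m \<notin> {1..m}" by simp
  then have "Suc m \<notin># M" using a by blast
  then show ?thesis by (simp add: count_eq_zero_iff)
qed

lemma Lset_card: "finite (Lset m s) \<and> card (Lset m s) = LL m s"
proof (induction m arbitrary: s)
  case 0 then show ?case by (simp add: Lset_0 LL_0)
next
  case (Suc m)
  let ?f = "\<lambda>t M. M + replicate_mset (s - t) (Suc m)"
  have inj: "inj_on (?f t) A" for t A by (rule inj_onI) simp
  have IH1: "finite (Lset m u)" for u using Suc.IH by blast
  have IH2: "card (Lset m u) = LL m u" for u using Suc.IH by blast
  have fin: "finite (?f t ` Lset m t)" for t by (rule finite_imageI) (rule IH1)
  have cimg: "card (?f t ` Lset m t) = LL m t" for t
    using card_image[OF inj[of t "Lset m t"]] IH2[of t] by simp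
  have disj: "(?f t ` Lset m t) \<inter> (?f t' ` Lset m t') = {}" if "t \<in> {..<s-1}" "t' \<in> {..<s-1}" "t \<noteq> t'" for t t'
  proof -
    have c0: "count M (Suc m) = 0" if "M \<in> Lset m u" for M u
      using that unfolding Lset_def by (simp add: c0_lemma)
    have "s - t \<noteq> s - t'" using that by auto
    show ?thesis
    proof (rule ccontr)
      assume "(?f t ` Lset m t) \<inter> (?f t' ` Lset m t') \<noteq> {}"
      then obtain N where N1: "N \<in> ?f t ` Lset m t" and N2: "N \<in> ?f t' ` Lset m t'" by blast
      from N1 obtain M1 where M1: "M1 \<in> Lset m t" and e1: "N = ?f t M1" by (rule imageE)
      from N2 obtain M2 where M2: "M2 \<in> Lset m t'" and e2: "N = ?f t' M2" by (rule imageE)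
      have e: "?f t M1 = ?f t' M2" using e1 e2 by simp
      have "count (?f t M1) (Suc m) = s - t" using c0[OF M1] by simp
      moreover have "count (?f t' M2) (Suc m) = s - t'" using c0[OF M2] by simp
      ultimately show False using e \<open>s - t \<noteq> s - t'\<close> by simp
    qed
  qed
  have disj2: "Lset m s \<inter> (\<Union>t\<in>{..<s-1}. ?f t ` Lset m t) = {}"
  proof -
    have c0: "count M (Suc m) = 0" if "M \<in> Lset m u" for M u
      using that unfolding Lset_def by (simp add: c0_lemma)
    show ?thesis
    proof (rule ccontr)
      assume "Lset m s \<inter> (\<Union>t\<in>{..<s-1}. ?f t ` Lset m t) \<noteq> {}"
      then obtain M where M: "M \<in> Lset m s" and MU: "M \<in> (\<Union>t\<in>{..<s-1}. ?f t ` Lset m t)" by blast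
      from MU obtain t where t: "t \<in> {..<s-1}" and Mt: "M \<in> ?f t ` Lset m t" by (rule UN_E)
      from Mt obtain M' where M': "M' \<in> Lset m t" and e: "M = ?f t M'" by (rule imageE)
      have A: "count M (Suc m) = 0" using c0[OF M] .
      have B: "count (?f t M') (Suc m) = s - t" using c0[OF M'] by simp
      have "count M (Suc m) = count (?f t M') (Suc m)" using e by (rule arg_cong)
      then have "s - t = 0" using A B by simp
      then show False using t by simp
    qed
  qed
  have finU: "finite (\<Union>t\<in>{..<s-1}. ?f t ` Lset m t)" using fin by simp
  have "card (\<Union>t\<in>{..<s-1}. ?f t ` Lset m t) = (\<Sum>t<s-1. card (?f t ` Lset m t))"
    by (rule card_UN_disjoint) (simp, use fin in blast, use disj in blast)
  also have "\<dots> = (\<Sum>t<s-1. LL m t)" using cimg by simp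
  finally have cU: "card (\<Union>t\<in>{..<s-1}. ?f t ` Lset m t) = (\<Sum>t<s-1. LL m t)" .
  have "card (Lset (Suc m) s) = card (Lset m s) + card (\<Union>t\<in>{..<s-1}. ?f t ` Lset m t)"
    unfolding Lset_Suc by (rule card_Un_disjoint) (rule IH1, rule finU, rule disj2)
  moreover have "finite (Lset (Suc m) s)" unfolding Lset_Suc using IH1 finU by blast
  ultimately show ?case using IH2 cU LL_Suc by simp
qed



lemma good_eq:
  assumes n: "n \<ge> 1"
  shows "good_multisets n = (\<lambda>M. M + replicate_mset (n - size M) n) ` Lset (n - 1) n"
proof (rule set_eqI, rule iffI)
  fix M assume M: "M \<in> good_multisets n"
  have setM: "set_mset M \<subseteq> {1..n}" and sz: "size M = n" and cnt: "\<forall>j\<in>{1..n-1}. count M j \<noteq> 1"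
    using M unfolding good_multisets_def by auto
  let ?M' = "filter_mset (\<lambda>x. x \<noteq> n) M"
  have eq: "M = ?M' + replicate_mset (count M n) n" by (rule split_ms)
  have szs: "size M = size ?M' + count M n" using eq by (metis size_replicate_mset size_union)
  have c: "count M n = n - size ?M'" using szs sz by simp
  have "?M' \<in> Lset (n - 1) n"
    unfolding Lset_def
  proof (intro CollectI conjI ballI)
    show "set_mset ?M' \<subseteq> {1..n-1}"
    proof
      fix x assume "x \<in># ?M'"
      then have "x \<in># M" "x \<noteq> n" by auto
      then have "x \<in> {1..n}" "x \<noteq> n" using setM by auto
      then show "x \<in> {1..n-1}" by auto
    qed
    show "size ?M' \<le> n" using szs sz by simp
    fix j assume j: "j \<in> {1..n-1}"
    then have "j \<noteq> n" by auto
    then show "count ?M' j \<noteq> 1" using cnt j by simp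
  qed
  moreover have "M = ?M' + replicate_mset (n - size ?M') n" using eq c by simp
  ultimately show "M \<in> (\<lambda>M. M + replicate_mset (n - size M) n) ` Lset (n - 1) n" by (rule rev_image_eqI)
next
  fix M assume "M \<in> (\<lambda>M. M + replicate_mset (n - size M) n) ` Lset (n - 1) n"
  then obtain M' where M': "M' \<in> Lset (n - 1) n" and M: "M = M' + replicate_mset (n - size M') n"
    by (rule imageE)
  have setM': "set_mset M' \<subseteq> {1..n-1}" and sz: "size M' \<le> n" and cnt: "\<forall>j\<in>{1..n-1}. count M' j \<noteq> 1"
    using M' unfolding Lset_def by auto
  show "M \<in> good_multisets n" unfolding good_multisets_def
  proof (intro CollectI conjI ballI)
    show "set_mset M \<subseteq> {1..n}"
    proof
      fix x assume "x \<in># M"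
      then have "x \<in># M' \<or> x = n" unfolding M by (simp split: if_splits)
      then show "x \<in> {1..n}"
      proof
        assume "x \<in># M'"
        then have "x \<in> {1..n-1}" by (rule subsetD[OF setM'])
        then show ?thesis by auto
      qed (use n in auto)
    qed
    show "size M = n" unfolding M using sz by simp
    fix j assume j: "j \<in> {1..n-1}"
    then have "j \<noteq> n" by auto
    then show "count M j \<noteq> 1" unfolding M using cnt j by simp
  qed
qed

lemma good_card:
  assumes n: "n \<ge> 1"
  shows "card (good_multisets n) = LL (n - 1) n"
proof -
  have c0: "count M n = 0" if "M \<in> Lset (n - 1) n" for M
  proof -
    have "set_mset M \<subseteq> {1..n-1}" using that unfolding Lset_def by auto
    then have "count M (Suc (n - 1)) = 0" by (rule c0_lemma)
    then show ?thesis using n by simp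
  qed
  have inj: "inj_on (\<lambda>M. M + replicate_mset (n - size M) n) (Lset (n - 1) n)"
  proof (rule inj_onI)
    fix M1 M2 assume M1: "M1 \<in> Lset (n - 1) n" and M2: "M2 \<in> Lset (n - 1) n"
      and e: "M1 + replicate_mset (n - size M1) n = M2 + replicate_mset (n - size M2) n"
    show "M1 = M2"
    proof (rule multiset_eqI)
      fix x
      show "count M1 x = count M2 x"
      proof (cases "x = n")
        case True then show ?thesis using c0[OF M1] c0[OF M2] by simp
      next
        case False
        have "count (M1 + replicate_mset (n - size M1) n) x = count (M2 + replicate_mset (n - size M2) n) x"
          using e by simp
        then show ?thesis using False by simp
      qed
    qed
  qed
  show ?thesis unfolding good_eq[OF n] card_image[OF inj] using Lset_card by blast
qed

lemma aa_LL: "aa m = real (LL m (m + 1))"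
  unfolding aa_def LL_def FF_def by simp

lemma aa_g: "aa m = fps_nth gf_A005773 (m + 1)"
proof (induction m rule: nat_less_induct)
  case (1 m)
  show ?case
  proof (cases m)
    case 0 then show ?thesis using g1 unfolding aa_def FF_def by simp
  next
    case (Suc m1)
    show ?thesis
    proof (cases m1)
      case 0 then show ?thesis using g2 Suc unfolding aa_def FF_def by (simp add: numeral_2_eq_2)
    next
      case (Suc k)
      have m: "m = k + 2" using Suc \<open>m = Suc m1\<close> by simp
      have IH1: "aa (k+1) = fps_nth gf_A005773 (k + 2)" using 1 m by simp
      have IH0: "aa k = fps_nth gf_A005773 (k + 1)" using 1 m by simp
      have r1: "real (k+3) * aa (k+2) = 2 * real (k+3) * aa (k+1) + 3 * real (k+1) * aa k" by (rule aa_rec)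
      have r2: "real (k + 2 + 1) * fps_nth gf_A005773 (k + 2 + 1) =
         2 * real (k + 2 + 1) * fps_nth gf_A005773 (k + 2) + 3 * real (k + 2 - 1) * fps_nth gf_A005773 (k + 2 - 1)"
        by (rule g_rec) simp
      have "real (k+3) * aa (k+2) = real (k+3) * fps_nth gf_A005773 (k + 3)"
        using r1 r2 IH1 IH0 by (simp add: add_ac eval_nat_numeral)
      then show ?thesis unfolding m by (simp add: add_ac eval_nat_numeral)
    qed
  qed
qed

theorem theorem4:
  fixes n :: nat
  assumes "n \<ge> 1"
  shows "real (card (good_multisets n)) = fps_nth gf_A005773 n"
proof -
  have "real (card (good_multisets n)) = aa (n - 1)"
    unfolding good_card[OF assms] aa_LL using assms by simp
  also have "\<dots> = fps_nth gf_A005773 n" unfolding aa_g using assms by simp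
  finally show ?thesis .
qed

end
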